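(* For every positive integer $m$, the Bayesian Price of Anarchy of the proportional allocation mechanism over instances with $m$ resources in which all valuation functions are concave is at least $\frac{\sqrt{m}}{2}$. That is, there exist an instance with $m$ resources and concave valuations (in every realization) and a Bayesian Nash equilibrium $\mathbf{B}$ of it such that $\mathbb{E}_{\mathbf{v}}[\mathrm{SW}(\mathbf{o}^{\mathbf{v}})] \ge \frac{\sqrt{m}}{2}\, \mathbb{E}_{\mathbf{v},\mathbf{b}\sim \mathbf{B}(\mathbf{v})}[\mathrm{SW}(\mathbf{b})]$.
   Context: There are $n$ agents and $m$ divisible resources, each of unit supply. Each agent $i$ has a valuation $v_i:[0,1]^m\to\mathbb{R}_{\ge 0}$ with $v_i(\mathbf{0})=0$ that is monotone non-decreasing (componentwise). A valuation is concave if it is a concave function on $[0,1]^m$. Proportional allocation mechanism: each agent $i$ submits a bid $b_{ij}\ge 0$ for every resource $j$; agent $i$ receives the fraction $x_{ij}(\mathbf{b})=b_{ij}/\sum_{k=1}^n b_{kj}$ of resource $j$ (if all bids on $j$ are $0$, the allocation of $j$ is defined arbitrarily but consistently) and pays $q_i(\mathbf{b})=\sum_{j}b_{ij}$. The utility is $u_i(\mathbf{b})=v_i(x_i(\mathbf{b}))-q_i(\mathbf{b})$, where $x_i=(x_{ij})_j$. The social welfare of an allocation is $\mathrm{SW}(\mathbf{x})=\sum_i v_i(x_i)$ and $\mathrm{SW}(\mathbf{b})=\mathrm{SW}(\mathbf{x}(\mathbf{b}))$; $\mathbf{o}^{\mathbf{v}}$ denotes a welfare-maximizing allocation (with $x_{ij}\ge0$,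 $\sum_i x_{ij}\le 1$) for valuation profile $\mathbf{v}$. Bayesian setting: each $v_i$ is drawn independently from a publicly known distribution $D_i$ over a set $V_i$ of valuations. A Bayesian Nash equilibrium is a profile $\mathbf{B}(\mathbf{v})=\times_i B_i(v_i)$, where $B_i(v_i)$ is a distribution over bid vectors of agent $i$, such that for every agent $i$, every $v_i$ and every bid vector $b_i'$, $\mathbb{E}_{\mathbf{v}_{-i},\mathbf{b}}[u_i(\mathbf{b})]\ge \mathbb{E}_{\mathbf{v}_{-i},\mathbf{b}}[u_i(b_i',\mathbf{b}_{-i})]$ (utilities evaluated with agent $i$'s valuation $v_i$). The Bayesian Price of Anarchy over a class of instances is the supremum, over instances in the class and Bayesian Nash equilibria $\mathbf{B}$, of $\mathbb{E}_{\mathbf{v}}[\mathrm{SW}(\mathbf{o}^{\mathbf{v}})]/\mathbb{E}_{\mathbf{v},\mathbf{b}\sim\mathbf{B}}[\mathrm{SW}(\mathbf{b})]$. *)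

theory Defs
  imports "HOL-Probability.Probability"
begin

type_synonym valuation = "(nat \<Rightarrow> real) \<Rightarrow> real"
type_synonym bidvec = "nat \<Rightarrow> real"

text \<open>Resources are indexed by 0..<m, agents by 0..<n. A bundle is a vector
 in [0,1]^m, represented as a function nat => real vanishing outside 0..<m.\<close>
definition cube :: "nat \<Rightarrow> (nat \<Rightarrow> real) set" where
  "cube m = {x. (\<forall>j<m. 0 \<le> x j \<and> x j \<le> 1) \<and> (\<forall>j. m \<le> j \<longrightarrow> x j = 0)}"

definition is_valuation :: "nat \<Rightarrow> valuation \<Rightarrow> bool" where
  "is_valuation m v \<longleftrightarrow> v (\<lambda>_. 0) = 0 \<and> (\<forall>x\<in>cube m. 0 \<le> v x) \<and>
     (\<forall>x\<in>cube m. \<forall>y\<in>cube m. (\<forall>j. x j \<le> y j) \<longrightarrow> v x \<le> v y)"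

definition concave_valuation :: "nat \<Rightarrow> valuation \<Rightarrow> bool" where
  "concave_valuation m v \<longleftrightarrow> is_valuation m v \<and>
     (\<forall>x\<in>cube m. \<forall>y\<in>cube m. \<forall>t::real. 0 \<le> t \<and> t \<le> 1 \<longrightarrow>
        t * v x + (1 - t) * v y \<le> v (\<lambda>j. t * x j + (1 - t) * y j))"

definition valid_bid :: "nat \<Rightarrow> bidvec \<Rightarrow> bool" where
  "valid_bid m b \<longleftrightarrow> (\<forall>j. 0 \<le> b j) \<and> (\<forall>j. m \<le> j \<longrightarrow> b j = 0)"

text \<open>Tie rule: tie n i j is the share of resource j given to agent i when there are
 n agents and all bids on j are zero (arbitrary but consistent).\<close>
definition valid_tie_rule :: "(nat \<Rightarrow> nat \<Rightarrow> nat \<Rightarrow> real) \<Rightarrow> bool" where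
  "valid_tie_rule tie \<longleftrightarrow> (\<forall>n i j. 0 \<le> tie n i j) \<and> (\<forall>n j. (\<Sum>i<n. tie n i j) \<le> 1)"

text \<open>Proportional allocation; b i j is agent i's bid on resource j.\<close>
definition alloc :: "(nat \<Rightarrow> nat \<Rightarrow> nat \<Rightarrow> real) \<Rightarrow> nat \<Rightarrow> nat \<Rightarrow> (nat \<Rightarrow> bidvec) \<Rightarrow> nat \<Rightarrow> nat \<Rightarrow> real" where
  "alloc tie n m b i j = (if j < m then
      (if (\<Sum>k<n. b k j) = 0 then tie n i j else b i j / (\<Sum>k<n. b k j)) else 0)"

definition payment :: "nat \<Rightarrow> (nat \<Rightarrow> bidvec) \<Rightarrow> nat \<Rightarrow> real" where
  "payment m b i = (\<Sum>j<m. b i j)"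

definition utility :: "(nat \<Rightarrow> nat \<Rightarrow> nat \<Rightarrow> real) \<Rightarrow> nat \<Rightarrow> nat \<Rightarrow> valuation \<Rightarrow> (nat \<Rightarrow> bidvec) \<Rightarrow> nat \<Rightarrow> real" where
  "utility tie n m vi b i = vi (alloc tie n m b i) - payment m b i"

definition SW_bids :: "(nat \<Rightarrow> nat \<Rightarrow> nat \<Rightarrow> real) \<Rightarrow> nat \<Rightarrow> nat \<Rightarrow> (nat \<Rightarrow> valuation) \<Rightarrow> (nat \<Rightarrow> bidvec) \<Rightarrow> real" where
  "SW_bids tie n m v b = (\<Sum>i<n. v i (alloc tie n m b i))"

definition feasible :: "nat \<Rightarrow> nat \<Rightarrow> (nat \<Rightarrow> nat \<Rightarrow> real) set" where
  "feasible n m = {x. (\<forall>i j. 0 \<le> x i j) \<and> (\<forall>i j. m \<le> j \<longrightarrow> x i j = 0) \<and>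
                      (\<forall>j<m. (\<Sum>i<n. x i j) \<le> 1)}"

definition welfare :: "nat \<Rightarrow> (nat \<Rightarrow> valuation) \<Rightarrow> (nat \<Rightarrow> nat \<Rightarrow> real) \<Rightarrow> real" where
  "welfare n v x = (\<Sum>i<n. v i (x i))"

definition OPT :: "nat \<Rightarrow> nat \<Rightarrow> (nat \<Rightarrow> valuation) \<Rightarrow> real" where
  "OPT n m v = (SUP x\<in>feasible n m. welfare n v x)"

definition vdist :: "nat \<Rightarrow> (nat \<Rightarrow> valuation pmf) \<Rightarrow> (nat \<Rightarrow> valuation) pmf" where
  "vdist n D = Pi_pmf {..<n} (\<lambda>_. 0) D"

definition bdist :: "nat \<Rightarrow> (nat \<Rightarrow> valuation \<Rightarrow> bidvec pmf) \<Rightarrow> (nat \<Rightarrow> valuation) \<Rightarrow> (nat \<Rightarrow> bidvec) pmf" where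
  "bdist n B v = Pi_pmf {..<n} (\<lambda>_. 0) (\<lambda>i. B i (v i))"

definition strategies_ok :: "nat \<Rightarrow> nat \<Rightarrow> (nat \<Rightarrow> valuation pmf) \<Rightarrow> (nat \<Rightarrow> valuation \<Rightarrow> bidvec pmf) \<Rightarrow> bool" where
  "strategies_ok m n D B \<longleftrightarrow> (\<forall>i<n. \<forall>vi\<in>set_pmf (D i).
      finite (set_pmf (B i vi)) \<and> (\<forall>b\<in>set_pmf (B i vi). valid_bid m b))"

definition is_BNE :: "(nat \<Rightarrow> nat \<Rightarrow> nat \<Rightarrow> real) \<Rightarrow> nat \<Rightarrow> nat \<Rightarrow> (nat \<Rightarrow> valuation pmf) \<Rightarrow> (nat \<Rightarrow> valuation \<Rightarrow> bidvec pmf) \<Rightarrow> bool" where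
  "is_BNE tie m n D B \<longleftrightarrow> (\<forall>i<n. \<forall>vi\<in>set_pmf (D i). \<forall>b'. valid_bid m b' \<longrightarrow>
      measure_pmf.expectation (vdist n (D(i := return_pmf vi)))
        (\<lambda>v. measure_pmf.expectation (bdist n B v) (\<lambda>b. utility tie n m vi (b(i := b')) i))
      \<le> measure_pmf.expectation (vdist n (D(i := return_pmf vi)))
        (\<lambda>v. measure_pmf.expectation (bdist n B v) (\<lambda>b. utility tie n m vi b i)))"

definition exp_SW :: "(nat \<Rightarrow> nat \<Rightarrow> nat \<Rightarrow> real) \<Rightarrow> nat \<Rightarrow> nat \<Rightarrow> (nat \<Rightarrow> valuation pmf) \<Rightarrow> (nat \<Rightarrow> valuation \<Rightarrow> bidvec pmf) \<Rightarrow> real" where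
  "exp_SW tie m n D B = measure_pmf.expectation (vdist n D)
      (\<lambda>v. measure_pmf.expectation (bdist n B v) (\<lambda>b. SW_bids tie n m v b))"

definition exp_OPT :: "nat \<Rightarrow> nat \<Rightarrow> (nat \<Rightarrow> valuation pmf) \<Rightarrow> real" where
  "exp_OPT m n D = measure_pmf.expectation (vdist n D) (\<lambda>v. OPT n m v)"

end

theory Submission
  imports Defs
begin

lemma vdist2:
  assumes "E 1 = return_pmf w"
  shows "vdist 2 E = map_pmf (\<lambda>y i. if i = 0 then y else if i = 1 then w else (\<lambda>_. 0)) (E 0)"
proof -
  have A: "{..<2::nat} = insert 0 {1}" by auto
  have E1: "E (Suc 0) = return_pmf w" using assms by (simp add: add_nonneg_pos)
  show ?thesis
    unfolding vdist_def A
    apply (subst Pi_pmf_insert, simp, simp)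
    apply (simp add: Pi_pmf_singleton E1 pair_return_pmf2 pmf.map_comp o_def)
    apply (intro pmf.map_cong refl)
    apply (auto simp: fun_eq_iff)
    done
qed

lemma sum2: "(\<Sum>k<(2::nat). f k) = f 0 + (f 1 :: real)"
  by (simp add: numeral_2_eq_2)

lemma alloc_eq:
  assumes "j < m" "b 0 j + b 1 j > 0"
  shows "alloc tie 2 m b i j = b i j / (b 0 j + b 1 j)"
  using assms unfolding alloc_def sum2 by auto

lemma amgm: fixes s c :: real assumes "s > 0" "c > 0" shows "s^2 / c + c \<ge> 2 * s"
proof -
  have "0 \<le> (c - s)^2 / c" using assms by (simp add: add_nonneg_pos)
  also have "(c - s)^2 / c = c - 2 * s + s^2/c" using assms by (simp add: power2_eq_square field_simps)
  finally show ?thesis by simp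
qed

lemma dev0: fixes b q :: real assumes "b \<ge> 0" "q > 0"
  shows "b / (b + q^2) - b \<le> (1 - q)^2"
proof -
  have c: "b + q^2 > 0" using assms by (simp add: add_nonneg_pos)
  have "b / (b + q^2) = 1 - q^2/(b+q^2)" using c by (simp add: field_simps)
  moreover have "q^2/(b+q^2) + (b + q^2) \<ge> 2*q" by (rule amgm[OF assms(2) c])
  ultimately show ?thesis by (simp add: power2_eq_square algebra_simps)
qed

lemma dev1: fixes b q s :: real assumes "b \<ge> 0" "q > 0" "s > 0"
  shows "b / (b + s * q^2) - s * b \<le> (1 - s * q)^2"
proof -
  have c: "b + s * q^2 > 0" using assms by (simp add: add_nonneg_pos)
  have "b / (b + s * q^2) = 1 - s * q^2/(b+s * q^2)" using c by (simp add: field_simps)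
  moreover have "q^2/(b+s * q^2) + (b + s * q^2) \<ge> 2*q" by (rule amgm[OF assms(2) c])
  hence "s * (q^2/(b+s * q^2) + (b + s * q^2)) \<ge> s * (2*q)" using assms(3) by simp
  ultimately show ?thesis by (simp add: power2_eq_square algebra_simps)
qed

definition "sr m = sqrt (real m)"
definition "sgm m = 1 / (1 + sr m)"
definition "bt m = (sgm m)^2"
definition "gm m = sr m * (sgm m)^2"
definition val1 :: "nat \<Rightarrow> valuation" where "val1 J = (\<lambda>x. x J)"
definition v2 :: "nat \<Rightarrow> valuation" where "v2 m = (\<lambda>x. sr m * Min ((\<lambda>j. x j) ` {..<m}))"
definition bidA :: "nat \<Rightarrow> valuation \<Rightarrow> bidvec" where
  "bidA m v = (\<lambda>j. if j < m \<and> v (\<lambda>k. if k = j then 1 else 0) = 1 then gm m else 0)"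
definition bidB :: "nat \<Rightarrow> bidvec" where "bidB m = (\<lambda>j. if j < m then bt m else 0)"
definition Bs :: "nat \<Rightarrow> nat \<Rightarrow> valuation \<Rightarrow> bidvec pmf" where
  "Bs m = (\<lambda>i v. return_pmf (if i = 0 then bidA m v else bidB m))"
definition Ds :: "nat \<Rightarrow> nat \<Rightarrow> valuation pmf" where
  "Ds m = (\<lambda>i. if i = 0 then map_pmf val1 (pmf_of_set {..<m}) else return_pmf (v2 m))"
definition prof :: "nat \<Rightarrow> valuation \<Rightarrow> nat \<Rightarrow> valuation" where
  "prof m y = (\<lambda>i. if i = 0 then y else if i = 1 then v2 m else (\<lambda>_. 0))"
definition bJ :: "nat \<Rightarrow> valuation \<Rightarrow> nat \<Rightarrow> bidvec" where
  "bJ m y = (\<lambda>i. if i < 2 then (if i = 0 then bidA m y else bidB m) else (\<lambda>_. 0))"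

lemma nums:
  assumes "1 \<le> m"
  shows "sr m \<ge> 1" "sgm m > 0" "sgm m \<le> 1" "bt m > 0" "gm m > 0"
    "bt m + gm m = sgm m" "1 - sgm m = sr m * sgm m" "real m = (sr m)^2"
proof -
  show s1: "sr m \<ge> 1" using assms by (simp add: sr_def)
  show "sgm m > 0" using s1 by (simp add: sgm_def)
  show "sgm m \<le> 1" using s1 by (simp add: sgm_def)
  show "bt m > 0" using s1 by (simp add: sgm_def bt_def)
  show "gm m > 0" using s1 by (simp add: sgm_def gm_def)
  show "bt m + gm m = sgm m"
  proof -
    have "bt m + gm m = (1 + sr m) * (sgm m)^2" by (simp add: bt_def gm_def algebra_simps)
    also have "\<dots> = sgm m" using s1 by (simp add: sgm_def power2_eq_square)
    finally show ?thesis .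
  qed
  show "1 - sgm m = sr m * sgm m" using s1 by (simp add: sgm_def field_simps)
  show "real m = (sr m)^2" by (simp add: sr_def)
qed

lemma vdistD: "vdist 2 (Ds m) = map_pmf (prof m) (Ds m 0)"
  by (subst vdist2[where w = "v2 m"]) (auto simp: Ds_def prof_def[abs_def])

lemma vdistD0: "vdist 2 ((Ds m)(0 := return_pmf y)) = return_pmf (prof m y)"
  by (subst vdist2[where w = "v2 m"]) (auto simp: Ds_def prof_def[abs_def])

lemma bdistD: "bdist 2 (Bs m) v = return_pmf (bJ m (v 0))"
  unfolding bdist_def Bs_def bJ_def
  by (subst Pi_pmf_return_pmf) (auto simp: fun_eq_iff)

lemma bidA_val1: "J < m \<Longrightarrow> bidA m (val1 J) = (\<lambda>j. if j = J then gm m else 0)"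
  by (auto simp: bidA_def val1_def fun_eq_iff)

lemma bJ0: "J < m \<Longrightarrow> bJ m (val1 J) 0 = (\<lambda>j. if j = J then gm m else 0)"
  by (simp add: bJ_def bidA_val1)
lemma bJ1: "bJ m y 1 = bidB m" "bJ m y (Suc 0) = bidB m"
  by (simp_all add: bJ_def)

lemma allocJ:
  assumes "1 \<le> m" "J < m" "j < m"
  shows "alloc tie 2 m (bJ m (val1 J)) 0 j = (if j = J then sr m * sgm m else 0)"
    "alloc tie 2 m (bJ m (val1 J)) 1 j = (if j = J then sgm m else 1)"
proof -
  note N = nums[OF assms(1)]
  have pos: "bJ m (val1 J) 0 j + bJ m (val1 J) 1 j > 0"
    using N assms by (simp add: bJ0 bJ1 bidB_def add_nonneg_pos)
  show "alloc tie 2 m (bJ m (val1 J)) 0 j = (if j = J then sr m * sgm m else 0)"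
  proof -
    have "gm m / (gm m + bt m) = sr m * sgm m"
    proof -
      have "gm m + bt m = sgm m" using N(6) by simp
      then show ?thesis using N(2) by (simp add: gm_def power2_eq_square)
    qed
    then show ?thesis using N assms unfolding alloc_eq[where b="bJ m (val1 J)" and j=j and m=m, OF assms(3) pos]
      by (auto simp: bJ0 bJ1 bidB_def)
  qed
  show "alloc tie 2 m (bJ m (val1 J)) 1 j = (if j = J then sgm m else 1)"
  proof -
    have "bt m / (gm m + bt m) = sgm m"
    proof -
      have "gm m + bt m = sgm m" using N(6) by simp
      then show ?thesis using N(2) by (simp add: bt_def power2_eq_square)
    qed
    then show ?thesis using N assms unfolding alloc_eq[where b="bJ m (val1 J)" and j=j and m=m, OF assms(3) pos]
      by (auto simp: bJ0 bJ1 bidB_def)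
  qed
qed

lemma min_alloc1:
  assumes "1 \<le> m" "J < m"
  shows "Min ((\<lambda>j. alloc tie 2 m (bJ m (val1 J)) 1 j) ` {..<m}) = sgm m"
proof (rule antisym)
  note N = nums[OF assms(1)]
  show "Min ((\<lambda>j. alloc tie 2 m (bJ m (val1 J)) 1 j) ` {..<m}) \<le> sgm m"
  proof -
    have "alloc tie 2 m (bJ m (val1 J)) 1 J = sgm m" using allocJ(2)[OF assms assms(2)] by simp
    then show ?thesis using assms by (intro Min_le_iff[THEN iffD2]) force+
  qed
  show "sgm m \<le> Min ((\<lambda>j. alloc tie 2 m (bJ m (val1 J)) 1 j) ` {..<m})"
    using assms N allocJ(2)[OF assms] by (subst Min_ge_iff) auto
qed

lemma SW_J:
  assumes "1 \<le> m" "J < m"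
  shows "SW_bids tie 2 m (prof m (val1 J)) (bJ m (val1 J)) = 2 * sr m * sgm m"
  unfolding SW_bids_def sum2
  using min_alloc1[OF assms] allocJ(1)[OF assms assms(2)]
  by (simp add: prof_def val1_def v2_def)

lemma conc_val1: "J < m \<Longrightarrow> concave_valuation m (val1 J)"
  unfolding concave_valuation_def is_valuation_def val1_def cube_def by auto

lemma Min_img_const: "1 \<le> (m::nat) \<Longrightarrow> Min ((\<lambda>j. (c::real)) ` {..<m}) = c"
proof -
  assume "1 \<le> m"
  then have "(0::nat) \<in> {..<m}" by auto
  then have "(\<lambda>j. c) ` {..<m} = {c}" by blast
  then show ?thesis by simp
qed

lemma conc_v2:
  assumes "1 \<le> m" shows "concave_valuation m (v2 m)"
proof -
  note N = nums[OF assms]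
  have ne: "{..<m} \<noteq> {}" using assms by (metis lessThan_iff less_le_trans empty_iff zero_less_one)
  have s0: "sr m \<ge> 0" using N by simp
  have v0: "v2 m (\<lambda>_. 0) = 0" using Min_img_const[OF assms, of 0] by (simp add: v2_def)
  have nn: "0 \<le> v2 m x" if "x \<in> cube m" for x
    using that ne s0 unfolding v2_def cube_def by (auto intro!: mult_nonneg_nonneg simp: Min_ge_iff)
  have mo: "v2 m x \<le> v2 m y" if "\<forall>j. x j \<le> y j" for x y
  proof -
    have "Min ((\<lambda>j. x j) ` {..<m}) \<le> Min ((\<lambda>j. y j) ` {..<m})"
      using that ne by (subst Min_ge_iff) (auto intro: order_trans[OF Min_le])
    then show ?thesis using s0 unfolding v2_def by (rule mult_left_mono)
  qed
  have cc: "t * v2 m x + (1 - t) * v2 m y \<le> v2 m (\<lambda>j. t * x j + (1 - t) * y j)"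
    if "0 \<le> t" "t \<le> 1" for x y and t :: real
  proof -
    have "t * Min ((\<lambda>j. x j) ` {..<m}) + (1 - t) * Min ((\<lambda>j. y j) ` {..<m})
          \<le> Min ((\<lambda>j. t * x j + (1 - t) * y j) ` {..<m})"
    proof (subst Min_ge_iff, simp, simp add: ne, clarsimp)
      fix j assume "j < m"
      then have "Min ((\<lambda>j. x j) ` {..<m}) \<le> x j" "Min ((\<lambda>j. y j) ` {..<m}) \<le> y j" by auto
      then show "t * Min ((\<lambda>j. x j) ` {..<m}) + (1 - t) * Min ((\<lambda>j. y j) ` {..<m}) \<le> t * x j + (1 - t) * y j"
        using that by (intro add_mono mult_left_mono) auto
    qed
    then have "sr m * (t * Min ((\<lambda>j. x j) ` {..<m}) + (1 - t) * Min ((\<lambda>j. y j) ` {..<m}))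
          \<le> sr m * Min ((\<lambda>j. t * x j + (1 - t) * y j) ` {..<m})" using s0 by (rule mult_left_mono)
    then show ?thesis unfolding v2_def by (simp add: algebra_simps)
  qed
  show ?thesis unfolding concave_valuation_def is_valuation_def using v0 nn mo cc by auto
qed

lemma OPT_J:
  assumes "1 \<le> m" "J < m"
  shows "sr m \<le> OPT 2 m (prof m (val1 J))"
proof -
  note N = nums[OF assms(1)]
  define xo where "xo = (\<lambda>(i::nat) (j::nat). if i = 1 \<and> j < m then (1::real) else 0)"
  have xf: "xo \<in> feasible 2 m" unfolding feasible_def xo_def sum2 by auto
  have "welfare 2 (prof m (val1 J)) xo = sr m"
  proof -
    have "(\<lambda>j. xo 1 j) ` {..<m} = (\<lambda>j. 1) ` {..<m}" by (auto simp: xo_def)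
    then show ?thesis unfolding welfare_def sum2 using Min_img_const[OF assms(1), of 1]
      by (simp add: prof_def val1_def v2_def xo_def)
  qed
  moreover have "bdd_above (welfare 2 (prof m (val1 J)) ` feasible 2 m)"
  proof (rule bdd_aboveI2)
    fix x assume "x \<in> feasible 2 m"
    then have x: "\<forall>i j. 0 \<le> x i j" "\<forall>j<m. x 0 j + x 1 j \<le> 1" unfolding feasible_def sum2 by auto
    have a: "x 0 J \<le> 1" using x assms(2) by (smt (verit))
    have "x 0 0 + x 1 0 \<le> 1" using x(2) assms(1) by simp
    then have b: "x 1 0 \<le> 1" using x(1) by (smt (verit))
    have "Min ((\<lambda>j. x 1 j) ` {..<m}) \<le> x 1 0" using assms(1) by (intro Min_le) auto
    then have "sr m * Min ((\<lambda>j. x 1 j) ` {..<m}) \<le> sr m * 1" using b N(1)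
      by (intro mult_left_mono) auto
    then show "welfare 2 (prof m (val1 J)) x \<le> 1 + sr m"
      unfolding welfare_def sum2 using a by (simp add: prof_def val1_def v2_def)
  qed
  ultimately show ?thesis using xf by (metis cSUP_upper OPT_def)
qed

lemma pay_ge: "valid_bid m b' \<Longrightarrow> J < m \<Longrightarrow> b' J \<le> (\<Sum>j<m. b' j)"
  unfolding valid_bid_def by (intro member_le_sum) auto

lemma dev_agent0:
  assumes "1 \<le> m" "J < m" "valid_bid m b'"
  shows "utility tie 2 m (val1 J) ((bJ m (val1 J))(0 := b')) 0 \<le> (1 - sgm m)^2"
proof -
  note N = nums[OF assms(1)]
  let ?b = "(bJ m (val1 J))(0 := b')"
  have nn: "b' J \<ge> 0" using assms(3) by (simp add: valid_bid_def)
  have pos: "?b 0 J + ?b 1 J > 0" using N assms nn by (simp add: bJ1 bidB_def add_nonneg_pos)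
  have al: "alloc tie 2 m ?b 0 J = b' J / (b' J + sgm m ^ 2)"
    unfolding alloc_eq[where b="?b" and j=J and m=m, OF assms(2) pos]
    using assms by (simp add: bJ1 bidB_def bt_def)
  have "utility tie 2 m (val1 J) ?b 0 = b' J / (b' J + sgm m ^ 2) - (\<Sum>j<m. b' j)"
    unfolding utility_def payment_def using al by (simp add: val1_def)
  also have "\<dots> \<le> b' J / (b' J + sgm m ^ 2) - b' J" using pay_ge[OF assms(3,2)] by simp
  also have "\<dots> \<le> (1 - sgm m)^2" by (rule dev0[OF nn N(2)])
  finally show ?thesis .
qed

lemma eq_agent0:
  assumes "1 \<le> m" "J < m"
  shows "utility tie 2 m (val1 J) (bJ m (val1 J)) 0 = (1 - sgm m)^2"
proof -
  note N = nums[OF assms(1)]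
  have p: "payment m (bJ m (val1 J)) 0 = gm m"
    unfolding payment_def bJ0[OF assms(2)] using assms(2) by (simp add: sum.delta)
  have "utility tie 2 m (val1 J) (bJ m (val1 J)) 0 = sr m * sgm m - sr m * sgm m ^ 2"
    unfolding utility_def p using allocJ(1)[OF assms assms(2)] by (simp add: val1_def gm_def)
  also have "\<dots> = (sr m * sgm m) * (1 - sgm m)" by (simp add: power2_eq_square algebra_simps)
  also have "\<dots> = (1 - sgm m)^2" using N(7) by (simp add: power2_eq_square)
  finally show ?thesis .
qed

lemma dev_agent1:
  assumes "1 \<le> m" "J < m" "valid_bid m b'"
  shows "utility tie 2 m (v2 m) ((bJ m (val1 J))(1 := b')) 1 \<le> sr m * (b' J / (b' J + gm m)) - (\<Sum>j<m. b' j)"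
proof -
  note N = nums[OF assms(1)]
  let ?b = "(bJ m (val1 J))(1 := b')"
  have nn: "b' J \<ge> 0" using assms(3) by (simp add: valid_bid_def)
  have pos: "?b 0 J + ?b 1 J > 0" using N assms nn by (simp add: bJ0 add_pos_nonneg)
  have al: "alloc tie 2 m ?b 1 J = b' J / (b' J + gm m)"
    unfolding alloc_eq[where b="?b" and j=J and m=m, OF assms(2) pos]
    using assms by (simp add: bJ0 add.commute)
  have "Min ((\<lambda>j. alloc tie 2 m ?b 1 j) ` {..<m}) \<le> alloc tie 2 m ?b 1 J"
    using assms(2) by (intro Min_le) auto
  then have "sr m * Min ((\<lambda>j. alloc tie 2 m ?b 1 j) ` {..<m}) \<le> sr m * (b' J / (b' J + gm m))"
    using al N(1) by (intro mult_left_mono) auto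
  then show ?thesis unfolding utility_def payment_def v2_def by simp
qed

lemma eq_agent1:
  assumes "1 \<le> m" "J < m"
  shows "utility tie 2 m (v2 m) (bJ m (val1 J)) 1 = sr m * sgm m ^ 2"
proof -
  note N = nums[OF assms(1)]
  have p: "payment m (bJ m (val1 J)) 1 = real m * bt m"
    unfolding payment_def bJ1 by (simp add: bidB_def)
  have "utility tie 2 m (v2 m) (bJ m (val1 J)) 1 = sr m * sgm m - sr m ^ 2 * sgm m ^ 2"
    unfolding utility_def p using min_alloc1[OF assms] N(8) by (simp add: v2_def bt_def)
  also have "\<dots> = (sr m * sgm m) * (1 - sr m * sgm m)" by (simp add: power2_eq_square algebra_simps)
  also have "\<dots> = sr m * sgm m ^ 2" using N(7) by (simp add: power2_eq_square)
  finally show ?thesis .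
qed

lemma avg_agent1:
  assumes "1 \<le> m" "valid_bid m b'"
  shows "(\<Sum>J<m. sr m * (b' J / (b' J + gm m)) - (\<Sum>j<m. b' j)) / real m \<le> sr m * sgm m ^ 2"
proof -
  note N = nums[OF assms(1)]
  have "(\<Sum>J<m. sr m * (b' J / (b' J + gm m)) - (\<Sum>j<m. b' j))
      = (\<Sum>J<m. sr m * (b' J / (b' J + gm m)) - real m * b' J)"
    by (simp add: sum_subtractf sum_distrib_left)
  also have "\<dots> \<le> (\<Sum>J<m. sr m * sgm m ^ 2)"
  proof (rule sum_mono)
    fix J assume "J \<in> {..<m}"
    have nn: "b' J \<ge> 0" using assms(2) by (simp add: valid_bid_def)
    have "sr m * (b' J / (b' J + gm m)) - real m * b' J
        = sr m * (b' J / (b' J + sr m * sgm m ^ 2) - sr m * b' J)"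
      using N(8) by (simp add: gm_def power2_eq_square algebra_simps)
    also have "\<dots> \<le> sr m * (1 - sr m * sgm m)^2"
      using dev1[OF nn N(2), of "sr m"] N(1) by (intro mult_left_mono) auto
    also have "\<dots> = sr m * sgm m ^ 2"
    proof -
      have "1 - sr m * sgm m = sgm m" using N(7) by linarith
      then show ?thesis by simp
    qed
    finally show "sr m * (b' J / (b' J + gm m)) - real m * b' J \<le> sr m * sgm m ^ 2" .
  qed
  also have "\<dots> = real m * (sr m * sgm m ^ 2)" by simp
  finally show ?thesis using assms(1) by (simp add: divide_le_eq mult.commute)
qed

lemma ne_m: "1 \<le> (m::nat) \<Longrightarrow> {..<m} \<noteq> {}"
proof -
  assume "1 \<le> m"
  then have "0 \<in> {..<m}" by simp
  then show ?thesis by blast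
qed

lemma setD0: "1 \<le> m \<Longrightarrow> set_pmf (Ds m 0) = val1 ` {..<m}"
proof -
  assume a: "1 \<le> m"
  have "set_pmf (pmf_of_set {..<m}) = {..<m}" by (rule set_pmf_of_set[OF ne_m[OF a]]) simp
  then show ?thesis by (simp add: Ds_def)
qed
  
lemma expD:
  assumes "1 \<le> m"
  shows "measure_pmf.expectation (vdist 2 (Ds m)) f = (\<Sum>J<m. f (prof m (val1 J))) / real m"
proof -
  have ne: "{..<m} \<noteq> {}" using ne_m[OF assms] .
  show ?thesis unfolding vdistD by (simp add: Ds_def integral_pmf_of_set[OF ne])
qed

lemma bJprof: "bJ m (prof m y 0) = bJ m y" by (simp add: prof_def)

theorem theorem1:
  fixes m :: nat and tie :: "nat \<Rightarrow> nat \<Rightarrow> nat \<Rightarrow> real"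
  assumes "1 \<le> m" and "valid_tie_rule tie"
  shows "\<exists>(n::nat) (D :: nat \<Rightarrow> valuation pmf) (B :: nat \<Rightarrow> valuation \<Rightarrow> bidvec pmf).
    1 \<le> n \<and>
    (\<forall>i<n. finite (set_pmf (D i)) \<and> (\<forall>v\<in>set_pmf (D i). concave_valuation m v)) \<and>
    strategies_ok m n D B \<and>
    is_BNE tie m n D B \<and>
    0 < exp_SW tie m n D B \<and>
    sqrt (real m) / 2 * exp_SW tie m n D B \<le> exp_OPT m n D"
proof (rule exI[of _ 2], rule exI[of _ "Ds m"], rule exI[of _ "Bs m"], intro conjI)
  note N = nums[OF assms(1)]
  show "1 \<le> (2::nat)" by simp
  show "\<forall>i<2. finite (set_pmf (Ds m i)) \<and> (\<forall>v\<in>set_pmf (Ds m i). concave_valuation m v)"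
  proof (intro allI impI)
    fix i :: nat assume "i < 2"
    show "finite (set_pmf (Ds m i)) \<and> (\<forall>v\<in>set_pmf (Ds m i). concave_valuation m v)"
    proof (cases "i = 0")
      case True then show ?thesis using setD0[OF assms(1)] conc_val1 by auto
    next
      case False then show ?thesis using conc_v2[OF assms(1)] by (simp add: Ds_def)
    qed
  qed
  show "strategies_ok m 2 (Ds m) (Bs m)"
    unfolding strategies_ok_def Bs_def valid_bid_def bidA_def bidB_def
    using N by auto
  have SWc: "exp_SW tie m 2 (Ds m) (Bs m) = 2 * sr m * sgm m"
  proof -
    have "exp_SW tie m 2 (Ds m) (Bs m) = (\<Sum>J<m. 2 * sr m * sgm m) / real m"
      unfolding exp_SW_def expD[OF assms(1)] bdistD
      using SW_J[OF assms(1)] by (simp add: bJprof)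
    then show ?thesis using assms(1) by simp
  qed
  show "0 < exp_SW tie m 2 (Ds m) (Bs m)" unfolding SWc using N by simp
  have OPTc: "sr m \<le> exp_OPT m 2 (Ds m)"
  proof -
    have "(\<Sum>J<m. sr m) \<le> (\<Sum>J<m. OPT 2 m (prof m (val1 J)))"
      using OPT_J[OF assms(1)] by (intro sum_mono) auto
    then have "(\<Sum>J<m. sr m) / real m \<le> (\<Sum>J<m. OPT 2 m (prof m (val1 J))) / real m"
      by (rule divide_right_mono) simp
    then have "(\<Sum>J<m. sr m) / real m \<le> exp_OPT m 2 (Ds m)"
      unfolding exp_OPT_def expD[OF assms(1)] .
    moreover have "(\<Sum>J<m. sr m) / real m = sr m" using assms(1) by simp
    ultimately show ?thesis by simp
  qed
  have "sr m * sgm m \<le> 1" using N by linarith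
  then have "sr m / 2 * (2 * sr m * sgm m) \<le> sr m"
    using N(1) mult_left_mono[of "sr m * sgm m" 1 "sr m"] by (simp add: algebra_simps)
  then show "sqrt (real m) / 2 * exp_SW tie m 2 (Ds m) (Bs m) \<le> exp_OPT m 2 (Ds m)"
    unfolding SWc using OPTc by (simp add: sr_def)
  show "is_BNE tie m 2 (Ds m) (Bs m)"
    unfolding is_BNE_def
  proof (intro allI impI ballI)
    fix i :: nat and vi b' assume i: "i < 2" and vi: "vi \<in> set_pmf (Ds m i)" and vb: "valid_bid m b'"
    show "measure_pmf.expectation (vdist 2 ((Ds m)(i := return_pmf vi)))
        (\<lambda>v. measure_pmf.expectation (bdist 2 (Bs m) v) (\<lambda>b. utility tie 2 m vi (b(i := b')) i))
      \<le> measure_pmf.expectation (vdist 2 ((Ds m)(i := return_pmf vi)))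
        (\<lambda>v. measure_pmf.expectation (bdist 2 (Bs m) v) (\<lambda>b. utility tie 2 m vi b i))"
    proof (cases "i = 0")
      case True
      then obtain J where J: "J < m" "vi = val1 J" using vi setD0[OF assms(1)] by auto
      show ?thesis unfolding True vdistD0 bdistD
        using dev_agent0[OF assms(1) J(1) vb, of tie] eq_agent0[OF assms(1) J(1), of tie] J
        by (simp add: bJprof)
    next
      case False
      then have i1: "i = 1" using i by simp
      have vi2: "vi = v2 m" using vi i1 by (simp add: Ds_def)
      have DD: "(Ds m)(1 := return_pmf (v2 m)) = Ds m" by (auto simp: Ds_def fun_eq_iff)
      have A: "(\<Sum>J<m. utility tie 2 m (v2 m) ((bJ m (val1 J))(1 := b')) 1) / real m
            \<le> (\<Sum>J<m. sr m * (b' J / (b' J + gm m)) - (\<Sum>j<m. b' j)) / real m"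
        apply (rule divide_right_mono)
         apply (rule sum_mono)
         apply (rule dev_agent1[OF assms(1) _ vb])
         apply simp
        apply simp
        done
      have B: "(\<Sum>J<m. utility tie 2 m (v2 m) (bJ m (val1 J)) 1) / real m = sr m * sgm m ^ 2"
      proof -
        have "(\<Sum>J<m. utility tie 2 m (v2 m) (bJ m (val1 J)) 1) = (\<Sum>J<m. sr m * sgm m ^ 2)"
          by (rule sum.cong[OF refl]) (rule eq_agent1[OF assms(1)], simp)
        then show ?thesis using assms(1) by simp
      qed
      have C: "(\<Sum>J<m. utility tie 2 m (v2 m) ((bJ m (val1 J))(1 := b')) 1) / real m
            \<le> (\<Sum>J<m. utility tie 2 m (v2 m) (bJ m (val1 J)) 1) / real m"
        using A avg_agent1[OF assms(1) vb] B by linarith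
      show ?thesis unfolding i1 vi2 DD expD[OF assms(1)] bdistD expectation_return_pmf bJprof
        by (rule C)
    qed
  qed
qed

end
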